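(* Let $f'$ and $f''$ be endofunctions of $[n']$ and $[n'']$ respectively. Then in $\mathbf{EFSym}$ $$R_{f'}R_{f''}=\sum_f R_f,$$ where the sum is over all endofunctions $f$ of $[n'+n'']$ such that $\mathrm{std}(f^{[n']})=f'$ and $\mathrm{std}(f^{[n'+n'']\setminus[n']})=f''$.
   Context: $\mathbf{EFSym}$: over $A=\{a_{ij}:i\ne j,\ i,j\ge1\}$ with $a_{ij}\prec a_{kl}$ iff $j=k$, for $f:[n]\to[n]$, $\mathbf S^f$ is the sum of words $w_1\cdots w_n$ over $A$ with $w_{f(j)}\prec w_j$ whenever $f(j)\ne j$; the $\mathbf S^f$ form a basis of $\mathbf{EFSym}$ with $\mathbf S^f\mathbf S^g=\mathbf S^{f\bullet g}$ (shifted concatenation: $i\mapsto f(i)$ for $i\le n$, $n+i\mapsto g(i)+n$). For $I\subseteq[n]$, $f^I:I\to I$ is $f^I(x)=f(x)$ if $f(x)\in I$ and $f^I(x)=x$ otherwise; $\mathrm{std}(f^I)=\tau_I\circ f^I\circ\tau_I^{-1}$ with $\tau_I:I\to[|I|]$ increasing. Partial order on endofunctions of $[n]$: the cover relation is $f<g$ iff there is $j$ with $f(j)\ne j$, $g(j)=j$ and $g(k)=f(k)$ for all $k\ne j$ (so $f\le g$ iff $g$ is obtained from $f$ by turning some non-fixed points into fixed points). $\mathrm{Fix}(f)$ is the number of fixed points of $f$, and $R_f=\sum_{g\le f}(-1)^{\mathrm{Fix}(f)-\mathrm{Fix}(g)}\mathbf S^g$. *)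

theory Defs
  imports "HOL-Library.FuncSet"
begin

definition letters :: "(nat \<times> nat) set" where
  "letters = {(i,j). i \<noteq> j \<and> 1 \<le> i \<and> 1 \<le> j}"

definition prec :: "nat \<times> nat \<Rightarrow> nat \<times> nat \<Rightarrow> bool" where
  "prec a b \<longleftrightarrow> snd a = fst b"

text \<open>Noncommutative formal power series over the alphabet, integer coefficients:
  coefficient functions on words (words containing non-letters get coefficient 0).\<close>
type_synonym series = "(nat \<times> nat) list \<Rightarrow> int"

definition ser_mult :: "series \<Rightarrow> series \<Rightarrow> series" where
  "ser_mult F G = (\<lambda>w. \<Sum>i\<le>length w. F (take i w) * G (drop i w))"

definition endo :: "nat \<Rightarrow> (nat \<Rightarrow> nat) set" where
  "endo n = {1..n} \<rightarrow>\<^sub>E {1..n}"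

definition S :: "nat \<Rightarrow> (nat \<Rightarrow> nat) \<Rightarrow> series" where
  "S n f = (\<lambda>w. if length w = n \<and> set w \<subseteq> letters \<and>
      (\<forall>j\<in>{1..n}. f j \<noteq> j \<longrightarrow> prec (w ! (f j - 1)) (w ! (j - 1))) then 1 else 0)"

definition cover :: "nat \<Rightarrow> (nat \<Rightarrow> nat) \<Rightarrow> (nat \<Rightarrow> nat) \<Rightarrow> bool" where
  "cover n f g \<longleftrightarrow> (\<exists>j\<in>{1..n}. f j \<noteq> j \<and> g j = j \<and> (\<forall>k. k \<noteq> j \<longrightarrow> g k = f k))"

definition endo_le :: "nat \<Rightarrow> (nat \<Rightarrow> nat) \<Rightarrow> (nat \<Rightarrow> nat) \<Rightarrow> bool" where
  "endo_le n = (cover n)\<^sup>*\<^sup>*"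

definition Fix :: "nat \<Rightarrow> (nat \<Rightarrow> nat) \<Rightarrow> nat" where
  "Fix n f = card {j\<in>{1..n}. f j = j}"

definition R :: "nat \<Rightarrow> (nat \<Rightarrow> nat) \<Rightarrow> series" where
  "R n f = (\<lambda>w. \<Sum>g\<in>{g\<in>endo n. endo_le n g f}. (-1) ^ (Fix n f - Fix n g) * S n g w)"

definition fI :: "(nat \<Rightarrow> nat) \<Rightarrow> nat set \<Rightarrow> (nat \<Rightarrow> nat)" where
  "fI f I = restrict (\<lambda>x. if f x \<in> I then f x else x) I"

definition tau :: "nat set \<Rightarrow> nat \<Rightarrow> nat" where
  "tau I x = card {y\<in>I. y < x} + 1"

definition std :: "(nat \<Rightarrow> nat) \<Rightarrow> nat set \<Rightarrow> (nat \<Rightarrow> nat)" where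
  "std F I = restrict (\<lambda>k. tau I (F (inv_into I (tau I) k))) {1..card I}"

end

theory Submission
  imports Defs
begin


lemma le_imp:
  assumes "endo_le n g f" shows "\<forall>j. f j = j \<or> f j = g j"
  using assms unfolding endo_le_def
proof (induction rule: rtranclp_induct)
  case base then show ?case by simp
next
  case (step y z)
  then show ?case unfolding cover_def by metis
qed

lemma cover_endo: "f \<in> endo n \<Longrightarrow> cover n f g \<Longrightarrow> g \<in> endo n"
proof -
  assume f: "f \<in> endo n" and c: "cover n f g"
  then obtain j where j: "j \<in> {1..n}" "g j = j" "\<forall>k. k \<noteq> j \<longrightarrow> g k = f k"
    unfolding cover_def by blast
  show "g \<in> endo n" unfolding endo_def
  proof (rule PiE_I)
    fix x assume "x \<in> {1..n}" thus "g x \<in> {1..n}" using j f unfolding endo_def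
      by (cases "x = j") auto
  next
    fix x assume x: "x \<notin> {1..n}"
    hence "x \<noteq> j" using j by auto
    thus "g x = undefined" using j f x unfolding endo_def by auto
  qed
qed

lemma imp_le_aux:
  "\<forall>g. g \<in> endo n \<longrightarrow> (\<forall>j\<in>{1..n}. f j = j \<or> f j = g j) \<longrightarrow>
     card {j\<in>{1..n}. g j \<noteq> f j} = m \<longrightarrow> f \<in> endo n \<longrightarrow> endo_le n g f"
proof (induction m)
  case 0
  show ?case
  proof (intro allI impI)
    fix g assume g: "g \<in> endo n" and h: "\<forall>j\<in>{1..n}. f j = j \<or> f j = g j"
      and c: "card {j\<in>{1..n}. g j \<noteq> f j} = 0" and f: "f \<in> endo n"
    have "\<forall>j\<in>{1..n}. g j = f j" using c by auto
    hence "g = f" using g f unfolding endo_def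
      by (intro extensionalityI[of _ "{1..n}"]) (auto simp: PiE_def)
    thus "endo_le n g f" unfolding endo_le_def by simp
  qed
next
  case (Suc m)
  show ?case
  proof (intro allI impI)
    fix g assume g: "g \<in> endo n" and h: "\<forall>j\<in>{1..n}. f j = j \<or> f j = g j"
      and c: "card {j\<in>{1..n}. g j \<noteq> f j} = Suc m" and f: "f \<in> endo n"
    then obtain j where j: "j \<in> {1..n}" "g j \<noteq> f j"
      by (metis (mono_tags, lifting) card.empty empty_Collect_eq nat.distinct(1))
    have fj: "f j = j" using h j by auto
    define g' where "g' = g(j := j)"
    have cov: "cover n g g'" unfolding cover_def g'_def using j fj by auto
    have g': "g' \<in> endo n" using cover_endo[OF g cov] .
    have h': "\<forall>j\<in>{1..n}. f j = j \<or> f j = g' j" using h fj unfolding g'_def by auto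
    have "{j\<in>{1..n}. g' j \<noteq> f j} = {j\<in>{1..n}. g j \<noteq> f j} - {j}"
      unfolding g'_def using fj by auto
    hence "card {j\<in>{1..n}. g' j \<noteq> f j} = m" using c j by simp
    hence "endo_le n g' f" using Suc.IH g' h' f by blast
    thus "endo_le n g f" unfolding endo_le_def using cov
      by (meson converse_rtranclp_into_rtranclp)
  qed
qed

lemma le_set:
  assumes f: "f \<in> endo n"
  shows "{g\<in>endo n. endo_le n g f} = PiE {1..n} (\<lambda>j. if f j = j then {1..n} else {f j})"
proof (intro set_eqI iffI)
  fix g assume "g \<in> {g\<in>endo n. endo_le n g f}"
  hence g: "g \<in> endo n" and "\<forall>j. f j = j \<or> f j = g j" using le_imp by auto
  thus "g \<in> PiE {1..n} (\<lambda>j. if f j = j then {1..n} else {f j})"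
    unfolding endo_def PiE_iff by auto
next
  fix g assume a: "g \<in> PiE {1..n} (\<lambda>j. if f j = j then {1..n} else {f j})"
  have g: "g \<in> endo n" using a f unfolding endo_def by (auto simp: PiE_iff split: if_splits)
  have "\<forall>j\<in>{1..n}. f j = j \<or> f j = g j" using a by (auto simp: PiE_iff split: if_splits)
  thus "g \<in> {g\<in>endo n. endo_le n g f}" using imp_le_aux g f by blast
qed



definition P :: "(nat \<times> nat) list \<Rightarrow> nat \<Rightarrow> nat \<Rightarrow> int" where
  "P w i j = (if prec (w!(i-1)) (w!(j-1)) then 1 else 0)"

definition c :: "(nat \<times> nat) list \<Rightarrow> nat \<Rightarrow> nat \<Rightarrow> nat \<Rightarrow> int" where
  "c w n j i = (if i = j then 1 - (\<Sum>i'\<in>{1..n}-{j}. P w i' j) else P w i j)"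

lemma prod01: "finite A \<Longrightarrow> (\<Prod>j\<in>A. if Q j then 1 else 0 :: int) = (if \<forall>j\<in>A. Q j then 1 else 0)"
  by (induction A rule: finite_induct) auto

lemma R_closed:
  assumes f: "f \<in> endo n"
  shows "R n f w = (if length w = n \<and> set w \<subseteq> letters then \<Prod>j\<in>{1..n}. c w n j (f j) else 0)"
proof -
  define B where "B = (\<lambda>j. if f j = j then {1..n} else {f j})"
  have R1: "R n f w = (\<Sum>g\<in>PiE {1..n} B. (-1) ^ (Fix n f - Fix n g) * S n g w)"
    unfolding R_def le_set[OF f] B_def ..
  show ?thesis
  proof (cases "length w = n \<and> set w \<subseteq> letters")
    case False
    hence "\<And>g. S n g w = 0" unfolding S_def by auto
    thus ?thesis unfolding R1 using False by auto
  next
    case ok: True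
    define d where "d = (\<lambda>j i. if f j = j then (if i = j then 1 else - P w i j) else P w i j)"
    have summand: "(-1) ^ (Fix n f - Fix n g) * S n g w = (\<Prod>j\<in>{1..n}. d j (g j))"
      if g: "g \<in> PiE {1..n} B" for g
    proof -
      have gB: "\<And>j. j \<in> {1..n} \<Longrightarrow> g j \<in> B j" using g by auto
      have "S n g w = (if \<forall>j\<in>{1..n}. (g j \<noteq> j \<longrightarrow> prec (w ! (g j - 1)) (w ! (j - 1))) then 1 else 0)"
        unfolding S_def using ok by simp
      also have "\<dots> = (\<Prod>j\<in>{1..n}. if (g j \<noteq> j \<longrightarrow> prec (w ! (g j - 1)) (w ! (j - 1))) then 1 else 0)"
        by (rule prod01[symmetric]) simp
      also have "\<dots> = (\<Prod>j\<in>{1..n}. if g j \<noteq> j then P w (g j) j else 1)"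
        by (rule prod.cong) (auto simp: P_def)
      finally have S1: "S n g w = (\<Prod>j\<in>{1..n}. if g j \<noteq> j then P w (g j) j else 1)" .
      have sub: "{j\<in>{1..n}. g j = j} \<subseteq> {j\<in>{1..n}. f j = j}"
      proof
        fix j assume "j \<in> {j\<in>{1..n}. g j = j}"
        then show "j \<in> {j\<in>{1..n}. f j = j}" using gB[of j] unfolding B_def
          by (auto split: if_splits)
      qed
      have "Fix n f - Fix n g = card ({j\<in>{1..n}. f j = j} - {j\<in>{1..n}. g j = j})"
        unfolding Fix_def using sub by (simp add: card_Diff_subset finite_subset)
      also have "{j\<in>{1..n}. f j = j} - {j\<in>{1..n}. g j = j} = {j\<in>{1..n}. f j = j \<and> g j \<noteq> j}"
        by auto
      finally have "(-1::int) ^ (Fix n f - Fix n g) = (\<Prod>j\<in>{j\<in>{1..n}. f j = j \<and> g j \<noteq> j}. -1)"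
        by simp
      also have "\<dots> = (\<Prod>j\<in>{1..n}. if f j = j \<and> g j \<noteq> j then -1 else 1)"
        by (rule prod.inter_filter) simp
      finally have F1: "(-1::int) ^ (Fix n f - Fix n g) = (\<Prod>j\<in>{1..n}. if f j = j \<and> g j \<noteq> j then -1 else 1)" .
      show ?thesis unfolding S1 F1 prod.distrib[symmetric]
      proof (rule prod.cong)
        fix j assume j: "j \<in> {1..n}"
        show "(if f j = j \<and> g j \<noteq> j then -1 else 1) * (if g j \<noteq> j then P w (g j) j else 1) = d j (g j)"
          using gB[OF j] unfolding d_def B_def by (auto split: if_splits)
      qed simp
    qed
    have "R n f w = (\<Sum>g\<in>PiE {1..n} B. \<Prod>j\<in>{1..n}. d j (g j))"
      unfolding R1 by (rule sum.cong) (auto simp: summand)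
    also have "\<dots> = (\<Prod>j\<in>{1..n}. \<Sum>i\<in>B j. d j i)"
      by (rule prod_sum_PiE[symmetric]) (auto simp: B_def)
    also have "\<dots> = (\<Prod>j\<in>{1..n}. c w n j (f j))"
    proof (rule prod.cong)
      fix j assume j: "j \<in> {1..n}"
      show "(\<Sum>i\<in>B j. d j i) = c w n j (f j)"
      proof (cases "f j = j")
        case True
        have "(\<Sum>i\<in>B j. d j i) = d j j + (\<Sum>i\<in>{1..n}-{j}. d j i)"
          unfolding B_def using True j by (simp add: sum.remove)
        also have "(\<Sum>i\<in>{1..n}-{j}. d j i) = (\<Sum>i\<in>{1..n}-{j}. - P w i j)"
          by (rule sum.cong) (auto simp: d_def True)
        finally show ?thesis unfolding c_def d_def using True by (simp add: sum_negf)
      next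
        case False
        thus ?thesis unfolding B_def d_def c_def by simp
      qed
    qed simp
    finally show ?thesis using ok by simp
  qed
qed



lemma tau_shift:
  assumes "x \<in> {a+1..a+m}" shows "tau {a+1..a+m} x = x - a"
proof -
  have "{y\<in>{a+1..a+m}. y < x} = {a+1..<x}" using assms by auto
  thus ?thesis unfolding tau_def using assms by (simp add: Suc_diff_Suc)
qed

lemma inv_tau_shift:
  assumes "k \<in> {1..m}" shows "inv_into {a+1..a+m} (tau {a+1..a+m}) k = k + a"
proof (rule inv_into_f_eq)
  show "inj_on (tau {a+1..a+m}) {a+1..a+m}"
  proof (rule inj_onI)
    fix x y assume x: "x \<in> {a+1..a+m}" and y: "y \<in> {a+1..a+m}"
      and e: "tau {a+1..a+m} x = tau {a+1..a+m} y"
    have "x - a = y - a" using e tau_shift[OF x] tau_shift[OF y] by simp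
    thus "x = y" using x y by auto
  qed
  show "k + a \<in> {a+1..a+m}" using assms by auto
  show "tau {a+1..a+m} (k + a) = k" using assms by (subst tau_shift) auto
qed

lemma std_shift:
  "std (fI f {a+1..a+m}) {a+1..a+m} =
     restrict (\<lambda>k. (if f (k+a) \<in> {a+1..a+m} then f (k+a) else k+a) - a) {1..m}"
proof (rule ext)
  fix k
  show "std (fI f {a+1..a+m}) {a+1..a+m} k =
     restrict (\<lambda>k. (if f (k+a) \<in> {a+1..a+m} then f (k+a) else k+a) - a) {1..m} k"
  proof (cases "k \<in> {1..m}")
    case True
    have ka: "k + a \<in> {a+1..a+m}" using True by auto
    have mem: "fI f {a+1..a+m} (k+a) \<in> {a+1..a+m}" using ka unfolding fI_def by auto
    have fe: "fI f {a+1..a+m} (k+a) = (if f (k+a) \<in> {a+1..a+m} then f (k+a) else k+a)"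
      using ka unfolding fI_def by simp
    have iv: "inv_into {a+1..a+m} (tau {a+1..a+m}) k = k + a" by (rule inv_tau_shift[OF True])
    have "std (fI f {a+1..a+m}) {a+1..a+m} k = tau {a+1..a+m} (fI f {a+1..a+m} (k+a))"
      unfolding std_def using True iv by simp
    also have "\<dots> = fI f {a+1..a+m} (k+a) - a" by (rule tau_shift[OF mem])
    finally show ?thesis unfolding fe using True by simp
  next
    case False
    thus ?thesis unfolding std_def restrict_def by auto
  qed
qed

lemma restrict_eq_iff: "g \<in> extensional A \<Longrightarrow> (restrict h A = g) \<longleftrightarrow> (\<forall>k\<in>A. h k = g k)"
  by (metis extensionalityI restrict_apply' restrict_extensional)

definition Aset :: "nat \<Rightarrow> nat \<Rightarrow> (nat \<Rightarrow> nat) \<Rightarrow> (nat \<Rightarrow> nat) \<Rightarrow> nat \<Rightarrow> nat set" where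
  "Aset n1 n2 f1 f2 j = (if j \<le> n1 then (if f1 j = j then insert j {n1+1..n1+n2} else {f1 j})
      else (if f2 (j-n1) = j-n1 then insert j {1..n1} else {f2 (j-n1) + n1}))"

lemma Fset:
  assumes f1: "f1 \<in> endo n1" and f2: "f2 \<in> endo n2"
  shows "{f\<in>endo (n1 + n2).
            std (fI f {1..n1}) {1..n1} = f1 \<and>
            std (fI f ({1..n1 + n2} - {1..n1})) ({1..n1 + n2} - {1..n1}) = f2}
       = PiE {1..n1+n2} (Aset n1 n2 f1 f2)"
proof -
  have I2: "{1..n1 + n2} - {1..n1} = {n1+1..n1+n2}" by auto
  have s1: "std (fI f {1..n1}) {1..n1} =
     restrict (\<lambda>k. (if f (k+0) \<in> {0+1..0+n1} then f (k+0) else k+0) - 0) {1..n1}" for f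
    using std_shift[of f 0 n1] by simp
  have s2: "std (fI f {n1+1..n1+n2}) {n1+1..n1+n2} =
     restrict (\<lambda>k. (if f (k+n1) \<in> {n1+1..n1+n2} then f (k+n1) else k+n1) - n1) {1..n2}" for f
    using std_shift[of f n1 n2] .
  have e1: "f1 \<in> extensional {1..n1}" and e2: "f2 \<in> extensional {1..n2}"
    using f1 f2 unfolding endo_def PiE_def by auto
  have r1: "f1 k \<in> {1..n1}" if "k \<in> {1..n1}" for k using f1 that unfolding endo_def by auto
  have r2: "f2 k \<in> {1..n2}" if "k \<in> {1..n2}" for k using f2 that unfolding endo_def by auto
  have pt1: "(f j \<in> {1..n1+n2} \<and> (if f j \<in> {1..n1} then f j else j) = f1 j) \<longleftrightarrow> f j \<in> Aset n1 n2 f1 f2 j"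
    if j: "j \<in> {1..n1}" for f j
    using j r1[OF j] unfolding Aset_def by auto
  have pt2: "(f (k+n1) \<in> {1..n1+n2} \<and> (if f (k+n1) \<in> {n1+1..n1+n2} then f (k+n1) else k+n1) - n1 = f2 k)
      \<longleftrightarrow> f (k+n1) \<in> Aset n1 n2 f1 f2 (k+n1)"
    if k: "k \<in> {1..n2}" for f k
    using k r2[OF k] unfolding Aset_def by auto
  have split: "(\<forall>j\<in>{1..n1+n2}. Q j) \<longleftrightarrow> (\<forall>j\<in>{1..n1}. Q j) \<and> (\<forall>k\<in>{1..n2}. Q (k+n1))" for Q
  proof
    assume "\<forall>j\<in>{1..n1+n2}. Q j" thus "(\<forall>j\<in>{1..n1}. Q j) \<and> (\<forall>k\<in>{1..n2}. Q (k+n1))" by auto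
  next
    assume a: "(\<forall>j\<in>{1..n1}. Q j) \<and> (\<forall>k\<in>{1..n2}. Q (k+n1))"
    show "\<forall>j\<in>{1..n1+n2}. Q j"
    proof
      fix j assume j: "j \<in> {1..n1+n2}"
      show "Q j"
      proof (cases "j \<le> n1")
        case True thus ?thesis using a j by auto
      next
        case False
        hence "j - n1 \<in> {1..n2}" "j = (j - n1) + n1" using j by auto
        thus ?thesis using a by metis
      qed
    qed
  qed
  show ?thesis
  proof (intro set_eqI)
    fix f
    have "f \<in> {f\<in>endo (n1 + n2).
            std (fI f {1..n1}) {1..n1} = f1 \<and>
            std (fI f ({1..n1 + n2} - {1..n1})) ({1..n1 + n2} - {1..n1}) = f2}
      \<longleftrightarrow> f \<in> extensional {1..n1+n2} \<and> (\<forall>j\<in>{1..n1+n2}. f j \<in> {1..n1+n2}) \<and>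
          (\<forall>j\<in>{1..n1}. (if f j \<in> {1..n1} then f j else j) = f1 j) \<and>
          (\<forall>k\<in>{1..n2}. (if f (k+n1) \<in> {n1+1..n1+n2} then f (k+n1) else k+n1) - n1 = f2 k)"
      unfolding I2 s2 restrict_eq_iff[OF e2] using s1[of f] restrict_eq_iff[OF e1]
      unfolding endo_def by (auto simp: PiE_iff)
    also have "\<dots> \<longleftrightarrow> f \<in> extensional {1..n1+n2} \<and> (\<forall>j\<in>{1..n1}. f j \<in> Aset n1 n2 f1 f2 j) \<and>
          (\<forall>k\<in>{1..n2}. f (k+n1) \<in> Aset n1 n2 f1 f2 (k+n1))"
      using pt1[of _ f] pt2[of _ f] split[of "\<lambda>j. f j \<in> {1..n1+n2}"] by blast
    also have "\<dots> \<longleftrightarrow> f \<in> PiE {1..n1+n2} (Aset n1 n2 f1 f2)"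
      using split[of "\<lambda>j. f j \<in> Aset n1 n2 f1 f2 j"] by (auto simp: PiE_iff)
    finally show "f \<in> {f\<in>endo (n1 + n2).
            std (fI f {1..n1}) {1..n1} = f1 \<and>
            std (fI f ({1..n1 + n2} - {1..n1})) ({1..n1 + n2} - {1..n1}) = f2}
      \<longleftrightarrow> f \<in> PiE {1..n1+n2} (Aset n1 n2 f1 f2)" .
  qed
qed



lemma Pu: assumes "length w \<ge> n1" "i \<in> {1..n1}" "j \<in> {1..n1}"
  shows "P w i j = P (take n1 w) i j"
proof -
  have "take n1 w ! (i-1) = w ! (i-1)" "take n1 w ! (j-1) = w ! (j-1)" using assms by auto
  thus ?thesis unfolding P_def by simp
qed

lemma Pv: assumes "length w \<ge> n1" "i \<in> {1..n2}" "k \<in> {1..n2}"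
  shows "P w (i+n1) (k+n1) = P (drop n1 w) i k"
proof -
  have "drop n1 w ! (i-1) = w ! (n1 + (i-1))" "drop n1 w ! (k-1) = w ! (n1 + (k-1))"
    using assms by simp_all
  moreover have "n1 + (i-1) = i + n1 - 1" "n1 + (k-1) = k + n1 - 1" using assms by auto
  ultimately show ?thesis unfolding P_def by simp
qed

lemma F1:
  assumes L: "length w = n1 + n2" and j: "j \<in> {1..n1}" and r: "f1 j \<in> {1..n1}"
  shows "(\<Sum>i\<in>Aset n1 n2 f1 f2 j. c w (n1+n2) j i) = c (take n1 w) n1 j (f1 j)"
proof (cases "f1 j = j")
  case False
  thus ?thesis using j r unfolding Aset_def c_def by (simp add: Pu L)
next
  case True
  have jn: "j \<le> n1" "j \<notin> {n1+1..n1+n2}" using j by auto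
  have "(\<Sum>i\<in>Aset n1 n2 f1 f2 j. c w (n1+n2) j i) = c w (n1+n2) j j + (\<Sum>i\<in>{n1+1..n1+n2}. c w (n1+n2) j i)"
    unfolding Aset_def using True jn by simp
  also have "(\<Sum>i\<in>{n1+1..n1+n2}. c w (n1+n2) j i) = (\<Sum>i\<in>{n1+1..n1+n2}. P w i j)"
    by (rule sum.cong) (use jn in \<open>auto simp: c_def\<close>)
  also have eqs: "{1..n1+n2} - {j} = ({1..n1} - {j}) \<union> {n1+1..n1+n2}" using j by auto
  have "(\<Sum>i\<in>({1..n1} - {j}) \<union> {n1+1..n1+n2}. P w i j) = (\<Sum>i\<in>{1..n1}-{j}. P w i j) + (\<Sum>i\<in>{n1+1..n1+n2}. P w i j)"
    by (rule sum.union_disjoint) auto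
  hence "(\<Sum>i\<in>{1..n1+n2}-{j}. P w i j) = (\<Sum>i\<in>{1..n1}-{j}. P w i j) + (\<Sum>i\<in>{n1+1..n1+n2}. P w i j)"
    unfolding eqs .
  moreover have "(\<Sum>i\<in>{1..n1}-{j}. P w i j) = (\<Sum>i\<in>{1..n1}-{j}. P (take n1 w) i j)"
    by (rule sum.cong) (use j L in \<open>auto intro: Pu\<close>)
  ultimately show ?thesis unfolding c_def using True by simp
qed

lemma F2:
  assumes L: "length w = n1 + n2" and k: "k \<in> {1..n2}" and r: "f2 k \<in> {1..n2}"
  shows "(\<Sum>i\<in>Aset n1 n2 f1 f2 (k+n1). c w (n1+n2) (k+n1) i) = c (drop n1 w) n2 k (f2 k)"
proof (cases "f2 k = k")
  case False
  have "f2 k + n1 \<noteq> k + n1" using False by simp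
  moreover have "P w (f2 k + n1) (k + n1) = P (drop n1 w) (f2 k) k"
    using Pv[of n1 w "f2 k" n2 k] L r k by simp
  ultimately show ?thesis using k r False unfolding Aset_def c_def by simp
next
  case True
  have jn: "\<not> k + n1 \<le> n1" "k + n1 \<notin> {1..n1}" using k by auto
  have "(\<Sum>i\<in>Aset n1 n2 f1 f2 (k+n1). c w (n1+n2) (k+n1) i) =
      c w (n1+n2) (k+n1) (k+n1) + (\<Sum>i\<in>{1..n1}. c w (n1+n2) (k+n1) i)"
    unfolding Aset_def using True jn by simp
  also have "(\<Sum>i\<in>{1..n1}. c w (n1+n2) (k+n1) i) = (\<Sum>i\<in>{1..n1}. P w i (k+n1))"
    by (rule sum.cong) (use jn in \<open>auto simp: c_def\<close>)
  also have eqs: "{1..n1+n2} - {k+n1} = {1..n1} \<union> ({n1+1..n1+n2} - {k+n1})" using k by auto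
  have "(\<Sum>i\<in>{1..n1} \<union> ({n1+1..n1+n2} - {k+n1}). P w i (k+n1)) = (\<Sum>i\<in>{1..n1}. P w i (k+n1)) + (\<Sum>i\<in>{n1+1..n1+n2}-{k+n1}. P w i (k+n1))"
    by (rule sum.union_disjoint) auto
  hence "(\<Sum>i\<in>{1..n1+n2}-{k+n1}. P w i (k+n1)) = (\<Sum>i\<in>{1..n1}. P w i (k+n1)) + (\<Sum>i\<in>{n1+1..n1+n2}-{k+n1}. P w i (k+n1))"
    unfolding eqs .
  moreover have "{n1+1..n1+n2}-{k+n1} = (\<lambda>i. i+n1) ` ({1..n2}-{k})"
  proof (rule set_eqI, rule iffI)
    fix x assume "x \<in> {n1+1..n1+n2}-{k+n1}"
    hence "x - n1 \<in> {1..n2}-{k}" "x = (x - n1) + n1" by auto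
    thus "x \<in> (\<lambda>i. i+n1) ` ({1..n2}-{k})" by (metis image_eqI)
  qed auto
  hence "(\<Sum>i\<in>{n1+1..n1+n2}-{k+n1}. P w i (k+n1)) = (\<Sum>i\<in>{1..n2}-{k}. P w (i+n1) (k+n1))"
    by (simp add: sum.reindex inj_on_def)
  moreover have "(\<Sum>i\<in>{1..n2}-{k}. P w (i+n1) (k+n1)) = (\<Sum>i\<in>{1..n2}-{k}. P (drop n1 w) i k)"
    by (rule sum.cong) (use k L in \<open>auto intro: Pv\<close>)
  ultimately show ?thesis unfolding c_def using True by simp
qed



theorem mainTheorem16:
  fixes f1 f2 :: "nat \<Rightarrow> nat" and n1 n2 :: nat
  assumes "f1 \<in> endo n1" and "f2 \<in> endo n2"
  shows "ser_mult (R n1 f1) (R n2 f2) =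
    (\<lambda>w. \<Sum>f\<in>{f\<in>endo (n1 + n2).
            std (fI f {1..n1}) {1..n1} = f1 \<and>
            std (fI f ({1..n1 + n2} - {1..n1})) ({1..n1 + n2} - {1..n1}) = f2}.
          R (n1 + n2) f w)"
proof (rule ext)
  fix w
  note f1 = assms(1) and f2 = assms(2)
  define A where "A = Aset n1 n2 f1 f2"
  have FS: "{f\<in>endo (n1 + n2).
            std (fI f {1..n1}) {1..n1} = f1 \<and>
            std (fI f ({1..n1 + n2} - {1..n1})) ({1..n1 + n2} - {1..n1}) = f2} = PiE {1..n1+n2} A"
    unfolding A_def by (rule Fset[OF f1 f2])
  have inendo: "f \<in> endo (n1+n2)" if "f \<in> PiE {1..n1+n2} A" for f
    using that unfolding FS[symmetric] by blast
  have r1: "f1 k \<in> {1..n1}" if "k \<in> {1..n1}" for k using f1 that unfolding endo_def by auto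
  have r2: "f2 k \<in> {1..n2}" if "k \<in> {1..n2}" for k using f2 that unfolding endo_def by auto
  have Rclos: "R (n1+n2) f w = (if length w = n1+n2 \<and> set w \<subseteq> letters
        then \<Prod>j\<in>{1..n1+n2}. c w (n1+n2) j (f j) else 0)" if "f \<in> PiE {1..n1+n2} A" for f
    using R_closed[OF inendo[OF that]] .
  define T where "T = (\<lambda>i. R n1 f1 (take i w) * R n2 f2 (drop i w))"
  have LHS: "ser_mult (R n1 f1) (R n2 f2) w = (\<Sum>i\<le>length w. T i)"
    unfolding ser_mult_def T_def ..
  have Tz: "T i = 0" if "i \<le> length w" "\<not> (i = n1 \<and> length w = n1+n2 \<and> set w \<subseteq> letters)" for i
  proof (rule ccontr)
    assume nz: "T i \<noteq> 0"
    have a: "length (take i w) = n1 \<and> set (take i w) \<subseteq> letters"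
      using nz unfolding T_def R_closed[OF f1] by (auto split: if_splits)
    have b: "length (drop i w) = n2 \<and> set (drop i w) \<subseteq> letters"
      using nz unfolding T_def R_closed[OF f2] by (auto split: if_splits)
    have "set w \<subseteq> letters" using a b by (metis append_take_drop_id le_sup_iff set_append)
    moreover have "i = n1" "length w = n1 + n2" using a b that(1) by auto
    ultimately show False using that(2) by blast
  qed
  show "ser_mult (R n1 f1) (R n2 f2) w = (\<Sum>f\<in>{f\<in>endo (n1 + n2).
            std (fI f {1..n1}) {1..n1} = f1 \<and>
            std (fI f ({1..n1 + n2} - {1..n1})) ({1..n1 + n2} - {1..n1}) = f2}.
          R (n1 + n2) f w)"
    unfolding FS
  proof (cases "length w = n1+n2 \<and> set w \<subseteq> letters")
    case False
    have "(\<Sum>i\<le>length w. T i) = 0" by (rule sum.neutral) (use Tz False in auto)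
    moreover have "(\<Sum>f\<in>PiE {1..n1+n2} A. R (n1+n2) f w) = 0"
      by (rule sum.neutral) (use Rclos False in auto)
    ultimately show "ser_mult (R n1 f1) (R n2 f2) w = (\<Sum>f\<in>PiE {1..n1+n2} A. R (n1+n2) f w)"
      unfolding LHS by simp
  next
    case ok: True
    have L: "length w = n1 + n2" using ok by simp
    have u: "length (take n1 w) = n1" "set (take n1 w) \<subseteq> letters"
      using ok set_take_subset by fastforce+
    have v: "length (drop n1 w) = n2" "set (drop n1 w) \<subseteq> letters"
      using ok set_drop_subset by fastforce+
    have "(\<Sum>i\<le>length w. T i) = T n1 + (\<Sum>i\<in>{..length w} - {n1}. T i)"
      by (rule sum.remove) (use L in auto)
    also have "(\<Sum>i\<in>{..length w} - {n1}. T i) = 0"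
      by (rule sum.neutral) (use Tz in auto)
    finally have "(\<Sum>i\<le>length w. T i) = T n1" by simp
    also have "T n1 = (\<Prod>j\<in>{1..n1}. c (take n1 w) n1 j (f1 j)) * (\<Prod>k\<in>{1..n2}. c (drop n1 w) n2 k (f2 k))"
      unfolding T_def R_closed[OF f1] R_closed[OF f2] using u v by simp
    finally have LL: "ser_mult (R n1 f1) (R n2 f2) w =
        (\<Prod>j\<in>{1..n1}. c (take n1 w) n1 j (f1 j)) * (\<Prod>k\<in>{1..n2}. c (drop n1 w) n2 k (f2 k))"
      unfolding LHS .
    have "(\<Sum>f\<in>PiE {1..n1+n2} A. R (n1+n2) f w) = (\<Sum>f\<in>PiE {1..n1+n2} A. \<Prod>j\<in>{1..n1+n2}. c w (n1+n2) j (f j))"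
      by (rule sum.cong) (use Rclos ok in auto)
    also have "\<dots> = (\<Prod>j\<in>{1..n1+n2}. \<Sum>i\<in>A j. c w (n1+n2) j i)"
      by (rule prod_sum_PiE[symmetric]) (auto simp: A_def Aset_def)
    finally have RHS1: "(\<Sum>f\<in>PiE {1..n1+n2} A. R (n1+n2) f w) = (\<Prod>j\<in>{1..n1+n2}. \<Sum>i\<in>A j. c w (n1+n2) j i)" .
    have eqs: "{1..n1+n2} = {1..n1} \<union> (\<lambda>k. k+n1) ` {1..n2}"
    proof (rule set_eqI, rule iffI)
      fix x assume x: "x \<in> {1..n1+n2}"
      show "x \<in> {1..n1} \<union> (\<lambda>k. k+n1) ` {1..n2}"
      proof (cases "x \<le> n1")
        case False
        hence "x - n1 \<in> {1..n2}" "x = (x - n1) + n1" using x by auto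
        thus ?thesis by (metis UnI2 image_eqI)
      qed (use x in auto)
    qed auto
    have "(\<Prod>j\<in>{1..n1} \<union> (\<lambda>k. k+n1) ` {1..n2}. \<Sum>i\<in>A j. c w (n1+n2) j i) =
        (\<Prod>j\<in>{1..n1}. \<Sum>i\<in>A j. c w (n1+n2) j i) * (\<Prod>j\<in>(\<lambda>k. k+n1) ` {1..n2}. \<Sum>i\<in>A j. c w (n1+n2) j i)"
      by (rule prod.union_disjoint) auto
    also have "(\<Prod>j\<in>(\<lambda>k. k+n1) ` {1..n2}. \<Sum>i\<in>A j. c w (n1+n2) j i) =
        (\<Prod>k\<in>{1..n2}. \<Sum>i\<in>A (k+n1). c w (n1+n2) (k+n1) i)"
      by (subst prod.reindex) (simp_all add: inj_on_def)
    also have "(\<Prod>k\<in>{1..n2}. \<Sum>i\<in>A (k+n1). c w (n1+n2) (k+n1) i) = (\<Prod>k\<in>{1..n2}. c (drop n1 w) n2 k (f2 k))"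
      by (rule prod.cong) (use F2[OF L] r2 in \<open>auto simp: A_def\<close>)
    also have "(\<Prod>j\<in>{1..n1}. \<Sum>i\<in>A j. c w (n1+n2) j i) = (\<Prod>j\<in>{1..n1}. c (take n1 w) n1 j (f1 j))"
      by (rule prod.cong) (use F1[OF L] r1 in \<open>auto simp: A_def\<close>)
    finally have RR: "(\<Prod>j\<in>{1..n1+n2}. \<Sum>i\<in>A j. c w (n1+n2) j i) =
        (\<Prod>j\<in>{1..n1}. c (take n1 w) n1 j (f1 j)) * (\<Prod>k\<in>{1..n2}. c (drop n1 w) n2 k (f2 k))"
      unfolding eqs .
    show "ser_mult (R n1 f1) (R n2 f2) w = (\<Sum>f\<in>PiE {1..n1+n2} A. R (n1+n2) f w)"
      unfolding LL RHS1 RR ..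
  qed
qed


end
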